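(* For every $v\in\mathbb T_F$ and $i\in[1,n]$, the pull-back $\mu_{v_0}^*(X_{i;v})\in R(X_1,\dots,X_n)$ of the coordinate $X_{i;v}$ of $\widehat{\mathscr X}$ to the initial patch is homogeneous with respect to the standard $\mathbb Z^n$-grading, and its degree is the $\mathbf c$-vector: $\deg\big(\mu_{v_0}^*(X_{i;v})\big)=\mathbf c_{i;v}$.
   Context: Fix $n\ge1$, a skew-symmetrizable integer matrix $B\in\mathbb Z^{n\times n}$ and a subset $F\subseteq[1,n]$ of frozen directions. Matrix mutation in direction $k$: $b'_{ij}=-b_{ij}$ if $i=k$ or $j=k$, else $b'_{ij}=b_{ij}+\operatorname{sgn}(b_{ik})[b_{ik}b_{kj}]_+$, with $[x]_+=\max(x,0)$ (componentwise on vectors). Let $\mathbb T$ be the $n$-regular tree with edges labeled by $[1,n]$ (distinct labels at each vertex) and initial vertex $v_0$, and $\mathbb T_F$ the subtree of vertices reachable from $v_0$ using only edges with labels in $[1,n]\setminus F$. Set $B_{v_0}=B$ and $B_{v'}=\mu_k(B_v)$ for an edge $v\overset{k}{-}v'$; write $B_v=(b^v_{ij})$. The $\mathbf c$-vectors $\mathbf c_{j;v}=(c_{1j;v},\dots,c_{nj;v})\in\mathbb Z^n$ are defined by $\mathbf c_{j;v_0}=\mathbf e_j$ and, for an edge $v\overset{k}{-}v'$, $c_{ik;v'}=-c_{ik;v}$ and $c_{ij;v'}=c_{ij;v}+[c_{ik;v}]_+b^v_{kj}+c_{ik;v}[-b^v_{kj}]_+$ for $j\ne k$ (these are the tropicalizations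 of the $Y$-pattern with initial matrix $B$). Each $\mathbf c_{j;v}$ is nonzero and sign-coherent (all entries $\ge0$ or all $\le0$). Let $R=\mathbb C[t_1,\dots,t_n]$ and $\mathbf t^{\mathbf a}=\prod t_i^{a_i}$ for $\mathbf a\in\mathbb Z_{\ge0}^n$. For $v\in\mathbb T_F$ let $U_v=\operatorname{Spec}R[X_{1;v},\dots,X_{n;v}]\cong\mathbb A^n_R$. For an edge $v\overset{k}{-}v'$ in $\mathbb T_F$ ($k\notin F$) let $\mu_k:U_v\dashrightarrow U_{v'}$ be the birational map with pull-back $\mu_k^*(X_{k;v'})=X_{k;v}^{-1}$ and, for $i\ne k$, $\mu_k^*(X_{i;v'})=X_{i;v}\big(\mathbf t^{[\operatorname{sgn}(b^v_{ki})\mathbf c_{k;v}]_+}+\mathbf t^{[-\operatorname{sgn}(b^v_{ki})\mathbf c_{k;v}]_+}X_{k;v}^{-\operatorname{sgn}(b^v_{ki})}\big)^{-b^v_{ki}}$. Composing along paths gives birational maps between any two patches, satisfying the cocycle condition; $\widehat{\mathscr X}$ is the $R$-scheme obtained by gluing the $U_v$ along the largest open subsets on which these maps are isomorphisms ($\mathcal X$-cluster variety with principal coefficients, specially completed). Write $X_i:=X_{i;v_0}$; $\mu_{v_0}^*(X_{i;v})\in R(X_1,\dots,X_n)$ is the rational function obtained by iterating these pull-backs along the path from $v$ to $v_0$. Standard grading: the $\mathbb Z^n$-grading on $R[X_1,\dots,X_n]$ with $\deg X_i=\mathbf e_i$ and $\deg t_i=-\mathbf e_i$, extended to rational functions $f/g$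 with $f,g$ nonzero homogeneous by $\deg(f/g)=\deg f-\deg g$. *)

theory Defs
  imports Complex_Main "HOL-Library.Poly_Mapping" "HOL-Library.Product_Lexorder"
          "HOL-Computational_Algebra.Fraction_Field"
begin

(* Index set [1,n] is a finite (linearly ordered) type 'n.
   Variables of R[X_1..X_n] = C[t_1..t_n][X_1..X_n]:  (False,i) = t_i,  (True,i) = X_i. *)
type_synonym 'n mono = "(bool \<times> 'n) \<Rightarrow>\<^sub>0 nat"
type_synonym 'n rpoly = "'n mono \<Rightarrow>\<^sub>0 complex"
type_synonym 'n rfun = "'n rpoly fract"

definition varP :: "bool \<times> 'n \<Rightarrow> 'n rpoly" where
  "varP v = Poly_Mapping.single (Poly_Mapping.single v 1) 1"

definition tvar :: "'n \<Rightarrow> 'n::{finite,linorder} rfun" where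
  "tvar i = Fract (varP (False, i)) 1"

definition xvar :: "'n \<Rightarrow> 'n::{finite,linorder} rfun" where
  "xvar i = Fract (varP (True, i)) 1"

definition tmon :: "('n \<Rightarrow> int) \<Rightarrow> 'n::{finite,linorder} rfun" where
  "tmon a = (\<Prod>i\<in>UNIV. tvar i ^ nat (a i))"

definition skew_symmetrizable :: "('n::finite \<Rightarrow> 'n \<Rightarrow> int) \<Rightarrow> bool" where
  "skew_symmetrizable B \<longleftrightarrow>
     (\<exists>D :: 'n \<Rightarrow> int. (\<forall>i. D i > 0) \<and> (\<forall>i j. D i * B i j = - (D j * B j i)))"

definition pos :: "int \<Rightarrow> int" where "pos x = max x 0"

definition mut_mat :: "'n \<Rightarrow> ('n \<Rightarrow> 'n \<Rightarrow> int) \<Rightarrow> ('n \<Rightarrow> 'n \<Rightarrow> int)" where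
  "mut_mat k M = (\<lambda>i j. if i = k \<or> j = k then - M i j
                         else M i j + sgn (M i k) * pos (M i k * M k j))"

(* c-matrix: C i j = c_{ij;v}, i.e. the j-th column is the c-vector c_{j;v} *)
definition mut_c :: "'n \<Rightarrow> ('n \<Rightarrow> 'n \<Rightarrow> int) \<Rightarrow> ('n \<Rightarrow> 'n \<Rightarrow> int) \<Rightarrow> ('n \<Rightarrow> 'n \<Rightarrow> int)" where
  "mut_c k M C = (\<lambda>i j. if j = k then - C i k
                         else C i j + pos (C i k) * M k j + C i k * pos (- M k j))"

(* P j = mu_{v0}^*(X_{j;v});  one step along an edge v -k- v' *)
definition mut_pb :: "'n \<Rightarrow> ('n \<Rightarrow> 'n \<Rightarrow> int) \<Rightarrow> ('n \<Rightarrow> 'n \<Rightarrow> int)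
                      \<Rightarrow> ('n \<Rightarrow> 'n::{finite,linorder} rfun) \<Rightarrow> ('n \<Rightarrow> 'n rfun)" where
  "mut_pb k M C P = (\<lambda>i. if i = k then inverse (P k)
      else (let s = sgn (M k i) in
            P i * power_int (tmon (\<lambda>l. pos (s * C l k))
                             + tmon (\<lambda>l. pos (- s * C l k)) * power_int (P k) (- s))
                            (- M k i)))"

definition seed_step :: "'n \<Rightarrow> ('n \<Rightarrow> 'n \<Rightarrow> int) \<times> ('n \<Rightarrow> 'n \<Rightarrow> int) \<times> ('n \<Rightarrow> 'n rfun)
     \<Rightarrow> ('n \<Rightarrow> 'n \<Rightarrow> int) \<times> ('n \<Rightarrow> 'n \<Rightarrow> int) \<times> ('n \<Rightarrow> 'n::{finite,linorder} rfun)" where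
  "seed_step k S = (case S of (M, C, P) \<Rightarrow> (mut_mat k M, mut_c k M C, mut_pb k M C P))"

(* a vertex v of the tree is the (reduced) word of edge labels on the path v0 -> v *)
definition seed_at :: "('n \<Rightarrow> 'n \<Rightarrow> int) \<Rightarrow> 'n list
     \<Rightarrow> ('n \<Rightarrow> 'n \<Rightarrow> int) \<times> ('n \<Rightarrow> 'n \<Rightarrow> int) \<times> ('n \<Rightarrow> 'n::{finite,linorder} rfun)" where
  "seed_at B ws = foldl (\<lambda>S k. seed_step k S) (B, (\<lambda>i j. if i = j then 1 else 0), xvar) ws"

definition Bmat :: "('n \<Rightarrow> 'n \<Rightarrow> int) \<Rightarrow> 'n list \<Rightarrow> ('n \<Rightarrow> 'n::{finite,linorder} \<Rightarrow> int)" where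
  "Bmat B ws = fst (seed_at B ws)"

definition cvec :: "('n \<Rightarrow> 'n \<Rightarrow> int) \<Rightarrow> 'n list \<Rightarrow> 'n \<Rightarrow> ('n::{finite,linorder} \<Rightarrow> int)" where
  "cvec B ws j = (\<lambda>i. fst (snd (seed_at B ws)) i j)"

definition pullback :: "('n \<Rightarrow> 'n \<Rightarrow> int) \<Rightarrow> 'n list \<Rightarrow> 'n \<Rightarrow> 'n::{finite,linorder} rfun" where
  "pullback B ws i = snd (snd (seed_at B ws)) i"

(* vertices of T_F: reduced words (no two consecutive equal labels) avoiding F *)
definition vertex_TF :: "'n set \<Rightarrow> 'n list \<Rightarrow> bool" where
  "vertex_TF F ws \<longleftrightarrow> set ws \<inter> F = {} \<and> successively (\<noteq>) ws"

definition mdeg :: "'n mono \<Rightarrow> ('n \<Rightarrow> int)" where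
  "mdeg m = (\<lambda>i. int (Poly_Mapping.lookup m (True, i)) - int (Poly_Mapping.lookup m (False, i)))"

definition homog_poly :: "'n rpoly \<Rightarrow> ('n \<Rightarrow> int) \<Rightarrow> bool" where
  "homog_poly p d \<longleftrightarrow> p \<noteq> 0 \<and> (\<forall>m\<in>Poly_Mapping.keys p. mdeg m = d)"

definition homog_rfun :: "'n::{finite,linorder} rfun \<Rightarrow> ('n \<Rightarrow> int) \<Rightarrow> bool" where
  "homog_rfun F d \<longleftrightarrow> (\<exists>f g df dg. homog_poly f df \<and> homog_poly g dg
                                   \<and> F = Fract f g \<and> d = df - dg)"

end

theory Submission
  imports Defs
begin

definition nn :: "'n rpoly \<Rightarrow> bool" where
  "nn p \<longleftrightarrow> (\<forall>m. Im (Poly_Mapping.lookup p m) = 0 \<and> 0 \<le> Re (Poly_Mapping.lookup p m))"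

definition good :: "'n::{finite,linorder} rfun \<Rightarrow> ('n \<Rightarrow> int) \<Rightarrow> bool" where
  "good F d \<longleftrightarrow> (\<exists>f g df dg. homog_poly f df \<and> homog_poly g dg \<and> nn f \<and> nn g
                                   \<and> F = Fract f g \<and> d = df - dg)"

lemma good_cong: "good a d \<Longrightarrow> d = d' \<Longrightarrow> good a d'" by simp

lemma good_homog: "good a d \<Longrightarrow> homog_rfun a d"
  unfolding good_def homog_rfun_def by blast

lemma mdeg_add: "mdeg (a + b) = (\<lambda>i. mdeg a i + mdeg b i)"
  by (auto simp: mdeg_def lookup_add)

lemma mdeg_zero: "mdeg 0 = (\<lambda>i. 0)"
  by (simp add: mdeg_def)

lemma sum_nn:
  assumes "\<And>x. Im (f x) = 0 \<and> 0 \<le> Re (f x)"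
  shows "Im (sum f A) = 0 \<and> 0 \<le> Re (sum f (A::'a set))"
  using assms by (simp add: Im_sum Re_sum sum_nonneg)

lemma Sum_any_nn:
  assumes "\<And>x. Im (f x) = 0 \<and> 0 \<le> Re (f x)"
  shows "Im (Sum_any f) = 0 \<and> 0 \<le> Re (Sum_any f)"
  using assms by (simp add: Sum_any.expand_set Im_sum Re_sum sum_nonneg)

lemma nn_mult: "nn f \<Longrightarrow> nn g \<Longrightarrow> nn (f * g)"
  unfolding nn_def lookup_mult
proof (intro allI Sum_any_nn)
  fix m l
  assume f: "\<forall>m. Im (Poly_Mapping.lookup f m) = 0 \<and> 0 \<le> Re (Poly_Mapping.lookup f m)"
     and g: "\<forall>m. Im (Poly_Mapping.lookup g m) = 0 \<and> 0 \<le> Re (Poly_Mapping.lookup g m)"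
  have "Im (Sum_any (\<lambda>q. Poly_Mapping.lookup g q when m = l + q)) = 0 \<and>
           0 \<le> Re (Sum_any (\<lambda>q. Poly_Mapping.lookup g q when m = l + q))"
    by (rule Sum_any_nn) (use g in \<open>simp add: when_def\<close>)
  with f show "Im (Poly_Mapping.lookup f l * Sum_any (\<lambda>q. Poly_Mapping.lookup g q when m = l + q)) = 0 \<and>
    0 \<le> Re (Poly_Mapping.lookup f l * Sum_any (\<lambda>q. Poly_Mapping.lookup g q when m = l + q))"
    by simp
qed

lemma nn_add: "nn f \<Longrightarrow> nn g \<Longrightarrow> nn (f + g)"
  unfolding nn_def by (simp add: lookup_add)

lemma homog_mult:
  fixes f g :: "'n::{finite,linorder} rpoly"
  assumes "homog_poly f a" "homog_poly g b" shows "homog_poly (f * g) (\<lambda>i. a i + b i)"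
proof -
  have "f * g \<noteq> 0" using assms by (simp add: homog_poly_def)
  moreover have "\<forall>m\<in>Poly_Mapping.keys (f * g). mdeg m = (\<lambda>i. a i + b i)"
    using assms keys_mult[of f g] unfolding homog_poly_def by (auto simp: mdeg_add)
  ultimately show ?thesis unfolding homog_poly_def by blast
qed

lemma homog_add:
  fixes f g :: "'n::{finite,linorder} rpoly"
  assumes "homog_poly f d" "homog_poly g d" "nn f" "nn g"
  shows "homog_poly (f + g) d"
proof -
  from assms(1) have "f \<noteq> 0" by (simp add: homog_poly_def)
  then obtain m where m: "Poly_Mapping.lookup f m \<noteq> 0"
    by (metis keys_eq_empty equals0I in_keys_iff)
  have "Poly_Mapping.lookup (f + g) m \<noteq> 0"
  proof
    assume "Poly_Mapping.lookup (f + g) m = 0"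
    hence "Re (Poly_Mapping.lookup f m) + Re (Poly_Mapping.lookup g m) = 0"
          "Im (Poly_Mapping.lookup f m) = 0"
      using assms(3) by (auto simp: lookup_add nn_def complex_eq_iff)
    with assms(3,4) m show False unfolding nn_def
      by (metis add_nonneg_eq_0_iff complex_eq_iff zero_complex.simps)
  qed
  hence "f + g \<noteq> 0" by auto
  with assms(1,2) keys_add[of f g] show ?thesis unfolding homog_poly_def by auto
qed

lemma good_mult:
  assumes "good a da" "good b db" shows "good (a * b) (\<lambda>i. da i + db i)"
proof -
  obtain f g df dg where A: "homog_poly f df" "homog_poly g dg" "nn f" "nn g" "a = Fract f g" "da = df - dg"
    using assms(1) unfolding good_def by blast
  obtain f' g' df' dg' where B: "homog_poly f' df'" "homog_poly g' dg'" "nn f'" "nn g'" "b = Fract f' g'" "db = df' - dg'"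
    using assms(2) unfolding good_def by blast
  have "homog_poly (f * f') (\<lambda>i. df i + df' i)" "homog_poly (g * g') (\<lambda>i. dg i + dg' i)"
    using A B homog_mult by blast+
  moreover have "nn (f * f')" "nn (g * g')" using A B nn_mult by blast+
  moreover have "a * b = Fract (f * f') (g * g')" using A B by simp
  moreover have "(\<lambda>i. da i + db i) = (\<lambda>i. df i + df' i) - (\<lambda>i. dg i + dg' i)" using A B by auto
  ultimately show ?thesis unfolding good_def by blast
qed

lemma good_inv: "good a d \<Longrightarrow> good (inverse a) (\<lambda>i. - d i)"
  unfolding good_def
  apply (elim exE conjE)
  subgoal for f g df dg
    apply (rule exI[of _ g], rule exI[of _ f], rule exI[of _ dg], rule exI[of _ df])
    apply auto
    done
  done

lemma good_add:
  assumes "good a d" "good b d" shows "good (a + b) d"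
proof -
  obtain f g df dg where A: "homog_poly f df" "homog_poly g dg" "nn f" "nn g" "a = Fract f g" "d = df - dg"
    using assms(1) unfolding good_def by blast
  obtain f' g' df' dg' where B: "homog_poly f' df'" "homog_poly g' dg'" "nn f'" "nn g'" "b = Fract f' g'" "d = df' - dg'"
    using assms(2) unfolding good_def by blast
  have g0: "g \<noteq> 0" "g' \<noteq> 0" using A B by (auto simp: homog_poly_def)
  have e: "(\<lambda>i. df' i + dg i) = (\<lambda>i. df i + dg' i)"
  proof
    fix i show "df' i + dg i = df i + dg' i"
      using fun_cong[OF trans[OF A(6)[symmetric] B(6)], of i] by simp
  qed
  have h1: "homog_poly (f * g') (\<lambda>i. df i + dg' i)" using A B homog_mult by blast
  have h2: "homog_poly (f' * g) (\<lambda>i. df i + dg' i)" using A B homog_mult e by metis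
  have "homog_poly (f * g' + f' * g) (\<lambda>i. df i + dg' i)"
    using homog_add[OF h1 h2] A B nn_mult by blast
  moreover have "homog_poly (g * g') (\<lambda>i. dg i + dg' i)" using A B homog_mult by blast
  moreover have "nn (f * g' + f' * g)" "nn (g * g')" using A B nn_mult nn_add by blast+
  moreover have "a + b = Fract (f * g' + f' * g) (g * g')" using A B g0 by simp
  moreover have "d = (\<lambda>i. df i + dg' i) - (\<lambda>i. dg i + dg' i)" using A by auto
  ultimately show ?thesis unfolding good_def by blast
qed


lemma nn_varP: "nn (varP v)"
  by (simp add: nn_def varP_def lookup_single when_def)

lemma single_ne0: "Poly_Mapping.single m (1::complex) \<noteq> 0"
  by (metis lookup_single_eq lookup_zero one_neq_zero)

lemma homog_varP: "homog_poly (varP v) (mdeg (Poly_Mapping.single v 1))"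
  by (simp add: homog_poly_def varP_def single_ne0 del: One_nat_def)

lemma nn_one: "nn 1"
  by (simp add: nn_def lookup_one when_def)

lemma homog_one: "homog_poly (1 :: 'n::{finite,linorder} rpoly) (\<lambda>i. 0)"
  by (simp add: homog_poly_def mdeg_zero)

lemma good_one: "good (1 :: 'n::{finite,linorder} rfun) (\<lambda>i. 0)"
  unfolding good_def
  by (rule exI[of _ 1], rule exI[of _ 1], rule exI[of _ "\<lambda>i. 0"], rule exI[of _ "\<lambda>i. 0"])
     (auto simp: homog_one nn_one One_fract_def)

lemma good_varP: "good (Fract (varP v) 1 :: 'n::{finite,linorder} rfun) (mdeg (Poly_Mapping.single v 1))"
  unfolding good_def
  by (rule exI[of _ "varP v"], rule exI[of _ 1], rule exI[of _ "mdeg (Poly_Mapping.single v 1)"],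
      rule exI[of _ "\<lambda>i. 0"]) (simp add: homog_one nn_one homog_varP nn_varP fun_diff_def del: One_nat_def)

lemma good_xvar: "good (xvar i) (\<lambda>l. if l = i then 1 else 0)"
  unfolding xvar_def
  by (rule good_cong[OF good_varP]) (auto simp: mdeg_def lookup_single when_def)

lemma good_tvar: "good (tvar i) (\<lambda>l. if l = i then -1 else 0)"
  unfolding tvar_def
  by (rule good_cong[OF good_varP]) (auto simp: mdeg_def lookup_single when_def)

lemma good_pow: "good a d \<Longrightarrow> good (a ^ n) (\<lambda>l. int n * d l)"
proof (induction n)
  case 0 then show ?case using good_one by simp
next
  case (Suc n)
  from good_mult[OF Suc.prems Suc.IH[OF Suc.prems]] show ?case
    unfolding power_Suc by (rule good_cong) (auto simp: algebra_simps)
qed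

lemma good_powint: "good a d \<Longrightarrow> good (power_int a k) (\<lambda>l. k * d l)"
proof (cases "0 \<le> k")
  case True
  assume "good a d"
  from good_pow[OF this, of "nat k"] True show ?thesis
    by (simp add: power_int_def)
next
  case False
  assume "good a d"
  from good_pow[OF good_inv[OF this], of "nat (-k)"] False show ?thesis
    by (simp add: power_int_def)
qed

lemma good_prod:
  "finite A \<Longrightarrow> (\<And>i. i \<in> A \<Longrightarrow> good (f i) (d i)) \<Longrightarrow> good (prod f A) (\<lambda>l. \<Sum>i\<in>A. d i l)"
proof (induction A rule: finite_induct)
  case empty then show ?case using good_one by simp
next
  case (insert x F)
  have "good (f x * prod f F) (\<lambda>l. d x l + (\<Sum>i\<in>F. d i l))"
    using insert by (intro good_mult) auto
  with insert show ?case by simp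
qed

lemma good_tmon:
  assumes "\<And>l. a l \<ge> 0"
  shows "good (tmon a :: 'n::{finite,linorder} rfun) (\<lambda>l. - a l)"
proof -
  have "good (tmon a) (\<lambda>l. \<Sum>i\<in>UNIV. int (nat (a i)) * (if l = i then -1 else 0))"
    unfolding tmon_def by (intro good_prod good_pow good_tvar) auto
  moreover have "(\<lambda>l. \<Sum>i\<in>UNIV. int (nat (a i)) * (if l = i then -1 else 0)) = (\<lambda>l. - a l)"
    using assms by (auto simp: if_distrib cong: if_cong)
  ultimately show ?thesis by simp
qed


lemma pos_nonneg: "pos x \<ge> 0" by (simp add: pos_def)

lemma key_id: "b * pos (sgn b * x) = pos x * b + x * pos (-b)"
  by (cases "b > 0"; cases "b < 0") (auto simp: pos_def sgn_if max_def algebra_simps)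

lemma pos_rel: "- pos (- s * x) + - s * x = - pos (s * x)"
  by (auto simp: pos_def max_def algebra_simps)

lemma step_good:
  fixes P :: "'n \<Rightarrow> 'n::{finite,linorder} rfun"
  assumes H: "\<And>j. good (P j) (\<lambda>l. C l j)"
  shows "good (mut_pb k M C P j) (\<lambda>l. mut_c k M C l j)"
proof (cases "j = k")
  case True
  then show ?thesis using good_inv[OF H[of k]] by (simp add: mut_pb_def mut_c_def)
next
  case False
  define s where "s = sgn (M k j)"
  have A: "good (tmon (\<lambda>l. pos (s * C l k)) :: 'n rfun) (\<lambda>l. - pos (s * C l k))"
    by (rule good_tmon) (simp add: pos_nonneg)
  have Bt: "good (tmon (\<lambda>l. pos (- s * C l k)) * power_int (P k) (- s)) (\<lambda>l. - pos (s * C l k))"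
    using good_mult[OF good_tmon[of "\<lambda>l. pos (- s * C l k)"] good_powint[OF H[of k], of "-s"]]
    by (rule good_cong) (auto simp: pos_nonneg pos_def max_def)
  have S: "good (power_int (tmon (\<lambda>l. pos (s * C l k)) + tmon (\<lambda>l. pos (- s * C l k)) * power_int (P k) (- s)) (- M k j))
     (\<lambda>l. (- M k j) * (- pos (s * C l k)))"
    by (rule good_powint[OF good_add[OF A Bt]])
  have "good (mut_pb k M C P j) (\<lambda>l. C l j + (- M k j) * (- pos (s * C l k)))"
    using good_mult[OF H[of j] S] False by (simp add: mut_pb_def s_def Let_def)
  moreover have "(\<lambda>l. C l j + (- M k j) * (- pos (s * C l k))) = (\<lambda>l. mut_c k M C l j)"
    using False key_id[of "M k j"] by (auto simp: mut_c_def s_def algebra_simps)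
  ultimately show ?thesis by simp
qed

lemma seed_good:
  "\<forall>j. good (snd (snd S) j) (\<lambda>l. fst (snd S) l j) \<Longrightarrow>
   \<forall>j. good (snd (snd (foldl (\<lambda>S k. seed_step k S) S ws)) j) (\<lambda>l. fst (snd (foldl (\<lambda>S k. seed_step k S) S ws)) l j)"
proof (induction ws arbitrary: S)
  case Nil then show ?case by simp
next
  case (Cons k ws)
  obtain M C P where SS: "S = (M, C, P)" by (cases S) auto
  have "\<forall>j. good (snd (snd (seed_step k S)) j) (\<lambda>l. fst (snd (seed_step k S)) l j)"
    using Cons.prems step_good[of P C k M] by (simp add: SS seed_step_def)
  from Cons.IH[OF this] show ?case by simp
qed

theorem mainTheorem5:
  fixes B :: "'n::{finite,linorder} \<Rightarrow> 'n \<Rightarrow> int" and F :: "'n set"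
    and v :: "'n list" and i :: 'n
  assumes "skew_symmetrizable B"
    and "vertex_TF F v"
  shows "homog_rfun (pullback B v i) (cvec B v i)"
proof -
  have "\<forall>j. good (snd (snd (seed_at B v)) j) (\<lambda>l. fst (snd (seed_at B v)) l j)"
    unfolding seed_at_def by (rule seed_good) (simp add: good_xvar)
  then show ?thesis unfolding pullback_def cvec_def by (blast intro: good_homog)
qed

end
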